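(* Let $a<b$ and let $H\subseteq\mathbb{R}^2$ be a functionally connected set such that $[a,b]\subseteq\mathrm{pr}_1[H]$. Let $h\colon[a,b]\to\mathbb{R}$ be a continuous function whose graph is included in $H$, and let $u,v\in\mathbb{R}$ be such that $(a,u),(b,v)\in H$. Then for every open interval $J$ such that $u,v\in J$ and $\mathrm{rng}(h)\subseteq J$, there exists a continuous function $g\colon[a,b]\to J$ whose graph is included in $H$, with $g(a)=u$ and $g(b)=v$.
   Context: $\mathrm{pr}_1[H]$ is the projection of $H$ to the first coordinate. A set $H\subseteq\mathbb{R}^2$ is functionally connected if for any two points $(x_1,y_1),(x_2,y_2)\in H$ with $x_1\neq x_2$ there exists a continuous function $h$ on the closed interval with endpoints $x_1,x_2$ such that $h(x_1)=y_1$, $h(x_2)=y_2$, and the graph of $h$ is included in $H$. *)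

theory Defs
  imports "HOL-Analysis.Analysis"
begin

definition functionally_connected :: "(real \<times> real) set \<Rightarrow> bool" where
  "functionally_connected H \<longleftrightarrow>
     (\<forall>x1 y1 x2 y2. (x1, y1) \<in> H \<and> (x2, y2) \<in> H \<and> x1 \<noteq> x2 \<longrightarrow>
        (\<exists>h. continuous_on {min x1 x2..max x1 x2} h \<and> h x1 = y1 \<and> h x2 = y2 \<and>
             (\<forall>x\<in>{min x1 x2..max x1 x2}. (x, h x) \<in> H)))"

end

theory Submission imports Defs begin
lemma fcD:
  assumes "functionally_connected H" "(x1,y1)\<in>H" "(x2,y2)\<in>H" "x1 < x2"
  shows "\<exists>f. continuous_on {x1..x2} f \<and> f x1 = y1 \<and> f x2 = y2 \<and> (\<forall>x\<in>{x1..x2}. (x, f x) \<in> H)"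
proof -
  have "x1 \<noteq> x2" "min x1 x2 = x1" "max x1 x2 = x2" using assms(4) by auto
  then show ?thesis using assms(1-3) unfolding functionally_connected_def by metis
qed

lemma glue:
  fixes f g :: "real \<Rightarrow> real"
  assumes "a \<le> c" "c \<le> b" "continuous_on {a..c} f" "continuous_on {c..b} g" "f c = g c"
  shows "continuous_on {a..b} (\<lambda>x. if x \<le> c then f x else g x)"
proof -
  have eq: "{a..b} = {a..c} \<union> {c..b}" using assms by auto
  have 1: "continuous_on {a..c} (\<lambda>x. if x \<le> c then f x else g x)"
    by (rule continuous_on_cong[THEN iffD1, OF refl _ assms(3)]) auto
  have 2: "continuous_on {c..b} (\<lambda>x. if x \<le> c then f x else g x)"
    by (rule continuous_on_cong[THEN iffD1, OF refl _ assms(4)]) (use assms(5) in auto)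
  show ?thesis unfolding eq by (rule continuous_on_closed_Un[OF _ _ 1 2]) auto
qed

lemma core:
  fixes h :: "real \<Rightarrow> real"
  assumes fc: "functionally_connected H" and ad: "a < d" and hc: "continuous_on {a..d} h"
    and hH: "\<forall>x\<in>{a..d}. (x,h x) \<in> H" and uH: "(a,u) \<in> H" and oJ: "open J"
    and iJ: "is_interval J" and uJ: "u \<in> J" and hJ: "h ` {a..d} \<subseteq> J" and hu: "h a < u"
  shows "\<exists>c\<in>{a..d}. \<exists>L. continuous_on {a..c} L \<and> L ` {a..c} \<subseteq> J \<and>
           (\<forall>x\<in>{a..c}. (x, L x) \<in> H) \<and> L a = u \<and> L c = h c"
proof -
  have iJ': "\<And>x y z. x \<in> J \<Longrightarrow> z \<in> J \<Longrightarrow> x \<le> y \<Longrightarrow> y \<le> z \<Longrightarrow> y \<in> J"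
    using iJ unfolding is_interval_1 by blast
  obtain \<rho> where \<rho>c: "continuous_on {a..d} \<rho>" and \<rho>a: "\<rho> a = u"
    and \<rho>H: "\<forall>x\<in>{a..d}. (x, \<rho> x) \<in> H"
    using fcD[OF fc uH, of d "h d"] hH ad by auto
  obtain e where e: "e > 0" "ball u e \<subseteq> J" using oJ uJ openE by blast
  obtain \<delta> where \<delta>: "\<delta> > 0" "\<forall>x\<in>{a..d}. dist x a < \<delta> \<longrightarrow> dist (\<rho> x) (\<rho> a) < e"
    using \<rho>c e(1) ad unfolding continuous_on_iff by (meson atLeastAtMost_iff less_imp_le order_refl)
  define s where "s = min d (a + \<delta>/2)"
  have as: "a < s" "s \<le> d" using ad \<delta> by (auto simp: s_def)
  have \<rho>J: "\<rho> x \<in> J" if "x \<in> {a..s}" for x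
  proof -
    have "dist x a < \<delta>" using that \<delta> by (auto simp: s_def dist_real_def)
    then have "dist (\<rho> x) u < e" using \<delta> that as \<rho>a by auto
    then show ?thesis using e by (auto simp: dist_commute)
  qed
  have hs: "(s, h s) \<in> H" using hH as by auto
  obtain k where kc: "continuous_on {a..s} k" and ka: "k a = u" and ks: "k s = h s"
    and kH: "\<forall>x\<in>{a..s}. (x, k x) \<in> H"
    using fcD[OF fc uH hs as(1)] by auto
  have hcs: "continuous_on {a..s} h" by (rule continuous_on_subset[OF hc]) (use as in auto)
  have \<rho>cs: "continuous_on {a..s} \<rho>" by (rule continuous_on_subset[OF \<rho>c]) (use as in auto)
  have hJs: "h x \<in> J" if "x \<in> {a..s}" for x using hJ that as by auto
  define Z where "Z = {x \<in> {a..s}. (\<lambda>x. k x - h x) x = 0}"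
  have kh: "continuous_on {a..s} (\<lambda>x. k x - h x)" using kc hcs by (intro continuous_intros)
  have "closed Z" unfolding Z_def
    by (rule closedin_closed_trans[OF continuous_closedin_preimage_constant[OF kh]]) auto
  moreover have "s \<in> Z" using as ks by (auto simp: Z_def)
  moreover have "bdd_below Z" by (auto simp: Z_def bdd_below_def)
  ultimately have c'Z: "Inf Z \<in> Z" using closed_contains_Inf by blast
  define c' where "c' = Inf Z"
  have c'min: "c' \<le> x" if "x \<in> Z" for x unfolding c'_def
    using that \<open>bdd_below Z\<close> by (rule cInf_lower)
  have c'1: "a \<le> c'" "c' \<le> s" "k c' = h c'" using c'Z by (auto simp: Z_def c'_def)
  have "c' \<noteq> a" using c'1 ka hu by auto
  with c'1 have ac': "a < c'" by auto
  have kgt: "k x > h x" if xx: "a \<le> x" "x < c'" for x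
  proof (rule ccontr)
    assume "\<not> h x < k x"
    then have "(\<lambda>x. k x - h x) x \<le> 0" "0 \<le> (\<lambda>x. k x - h x) a" using ka hu by auto
    moreover have "continuous_on {a..x} (\<lambda>x. k x - h x)"
      by (rule continuous_on_subset[OF kh]) (use that c'1 in auto)
    ultimately obtain y where "a \<le> y" "y \<le> x" "k y - h y = 0"
      using IVT2'[of "\<lambda>x. k x - h x" x 0 a] xx by auto
    then have "y \<in> Z" using that c'1 by (auto simp: Z_def)
    then show False using c'min \<open>y \<le> x\<close> that by fastforce
  qed
  define B where "B = {a..c'} \<inter> k -` (- J)"
  show ?thesis
  proof (cases "B = {}")
    case True
    show ?thesis
    proof (intro bexI[of _ c'] exI[of _ k] conjI)
      show "continuous_on {a..c'} k" by (rule continuous_on_subset[OF kc]) (use c'1 in auto)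
      show "k ` {a..c'} \<subseteq> J" using True by (auto simp: B_def)
      show "\<forall>x\<in>{a..c'}. (x, k x) \<in> H" using kH c'1 by auto
    qed (use ka c'1 as in auto)
  next
    case False
    have kc': "continuous_on {a..c'} k" by (rule continuous_on_subset[OF kc]) (use c'1 in auto)
    have "closed B" unfolding B_def
      by (rule closedin_closed_trans[OF continuous_closedin_preimage[OF kc']]) (use oJ in auto)
    moreover have "bdd_above B" by (auto simp: B_def bdd_above_def)
    ultimately have \<sigma>B: "Sup B \<in> B" using False closed_contains_Sup by blast
    define \<sigma> where "\<sigma> = Sup B"
    have \<sigma>max: "x \<le> \<sigma>" if "x \<in> B" for x unfolding \<sigma>_def
      using that \<open>bdd_above B\<close> by (rule cSup_upper)
    have \<sigma>1: "a \<le> \<sigma>" "\<sigma> \<le> c'" "k \<sigma> \<notin> J" using \<sigma>B by (auto simp: B_def \<sigma>_def)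
    have "\<sigma> \<noteq> c'" using \<sigma>1 c'1 hJs[of c'] by auto
    with \<sigma>1 have \<sigma>c': "\<sigma> < c'" by auto
    have "k \<sigma> > h \<sigma>" using kgt \<sigma>1 \<sigma>c' by auto
    moreover have "\<rho> \<sigma> \<in> J" "h \<sigma> \<in> J" using \<rho>J hJs \<sigma>1 c'1 by auto
    ultimately have \<rho>k: "\<rho> \<sigma> < k \<sigma>" using iJ' \<sigma>1 by (meson less_imp_le not_le)
    show ?thesis
    proof (cases "\<rho> c' \<ge> h c'")
      case True
      have "continuous_on {\<sigma>..c'} (\<lambda>x. k x - \<rho> x)"
        by (rule continuous_on_subset[OF continuous_on_diff[OF kc \<rho>cs]]) (use \<sigma>1 c'1 in auto)
      then obtain e where e1: "\<sigma> \<le> e" "e \<le> c'" "k e - \<rho> e = 0"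
        using IVT2'[of "\<lambda>x. k x - \<rho> x" c' 0 \<sigma>] True c'1 \<rho>k \<sigma>c' by auto
      have "e \<noteq> \<sigma>" using e1 \<rho>k by auto
      with e1 have \<sigma>e: "\<sigma> < e" by auto
      define L where "L = (\<lambda>x. if x \<le> e then \<rho> x else k x)"
      show ?thesis
      proof (intro bexI[of _ c'] exI[of _ L] conjI)
        show "continuous_on {a..c'} L" unfolding L_def
          proof (rule glue)
          show "continuous_on {a..e} \<rho>" by (rule continuous_on_subset[OF \<rho>cs]) (use e1 c'1 in auto)
          show "continuous_on {e..c'} k" by (rule continuous_on_subset[OF kc]) (use \<sigma>1 e1 c'1 in auto)
        qed (use \<sigma>1 e1 in auto)
        show "L ` {a..c'} \<subseteq> J"
        proof
          fix y assume "y \<in> L ` {a..c'}"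
          then obtain x where x: "x \<in> {a..c'}" "y = L x" by auto
          show "y \<in> J"
          proof (cases "x \<le> e")
            case True then show ?thesis using x \<rho>J c'1 by (auto simp: L_def)
          next
            case False
            then have "x \<notin> B" using \<sigma>max \<sigma>e by fastforce
            then show ?thesis using x False by (auto simp: L_def B_def)
          qed
        qed
        show "\<forall>x\<in>{a..c'}. (x, L x) \<in> H" using \<rho>H kH c'1 as by (auto simp: L_def)
        show "L a = u" using \<sigma>1 e1 \<rho>a by (auto simp: L_def)
        show "L c' = h c'" using e1 c'1 by (auto simp: L_def)
      qed (use c'1 as in auto)
    next
      case False
      have "continuous_on {a..c'} (\<lambda>x. \<rho> x - h x)"
        by (rule continuous_on_subset[OF continuous_on_diff[OF \<rho>cs hcs]]) (use c'1 in auto)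
      then obtain e where e1: "a \<le> e" "e \<le> c'" "\<rho> e - h e = 0"
        using IVT2'[of "\<lambda>x. \<rho> x - h x" c' 0 a] False c'1 \<rho>a hu by auto
      show ?thesis
      proof (intro bexI[of _ e] exI[of _ \<rho>] conjI)
        show "continuous_on {a..e} \<rho>" by (rule continuous_on_subset[OF \<rho>cs]) (use e1 c'1 in auto)
        show "\<rho> ` {a..e} \<subseteq> J" using \<rho>J e1 c'1 by auto
        show "\<forall>x\<in>{a..e}. (x, \<rho> x) \<in> H" using \<rho>H e1 c'1 as by auto
      qed (use e1 c'1 as \<rho>a in auto)
    qed
  qed
qed

lemma fc_yflip:
  assumes "functionally_connected H"
  shows "functionally_connected {(x,y). (x,-y) \<in> H}"
  unfolding functionally_connected_def
proof (intro allI impI)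
  fix x1 y1 x2 y2 :: real
  assume "(x1, y1) \<in> {(x, y). (x, - y) \<in> H} \<and> (x2, y2) \<in> {(x, y). (x, - y) \<in> H} \<and> x1 \<noteq> x2"
  then have "(x1, -y1) \<in> H" "(x2, -y2) \<in> H" "x1 \<noteq> x2" by auto
  then obtain f where f: "continuous_on {min x1 x2..max x1 x2} f" "f x1 = -y1" "f x2 = -y2"
     "\<forall>x\<in>{min x1 x2..max x1 x2}. (x, f x) \<in> H"
    using assms unfolding functionally_connected_def by blast
  show "\<exists>h. continuous_on {min x1 x2..max x1 x2} h \<and> h x1 = y1 \<and> h x2 = y2 \<and>
         (\<forall>x\<in>{min x1 x2..max x1 x2}. (x, h x) \<in> {(x, y). (x, - y) \<in> H})"
    by (rule exI[of _ "\<lambda>x. - f x"]) (use f in \<open>auto intro: continuous_intros\<close>)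
qed

lemma fc_xflip:
  assumes "functionally_connected H"
  shows "functionally_connected {(x,y). (-x,y) \<in> H}"
  unfolding functionally_connected_def
proof (intro allI impI)
  fix x1 y1 x2 y2 :: real
  assume "(x1, y1) \<in> {(x, y). (-x, y) \<in> H} \<and> (x2, y2) \<in> {(x, y). (-x, y) \<in> H} \<and> x1 \<noteq> x2"
  then have "(-x1, y1) \<in> H" "(-x2, y2) \<in> H" "-x1 \<noteq> -x2" by auto
  then obtain f where f: "continuous_on {min (-x1) (-x2)..max (-x1) (-x2)} f" "f (-x1) = y1" "f (-x2) = y2"
     "\<forall>x\<in>{min (-x1) (-x2)..max (-x1) (-x2)}. (x, f x) \<in> H"
    using assms unfolding functionally_connected_def by blast
  have c: "continuous_on {min x1 x2..max x1 x2} (\<lambda>x. f (- x))"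
    by (rule continuous_on_compose2[OF f(1) continuous_on_minus[OF continuous_on_id]]) auto
  show "\<exists>h. continuous_on {min x1 x2..max x1 x2} h \<and> h x1 = y1 \<and> h x2 = y2 \<and>
         (\<forall>x\<in>{min x1 x2..max x1 x2}. (x, h x) \<in> {(x, y). (-x, y) \<in> H})"
  proof (rule exI[of _ "\<lambda>x. f (- x)"], intro conjI ballI)
    fix x assume "x \<in> {min x1 x2..max x1 x2}"
    then have "-x \<in> {min (-x1) (-x2)..max (-x1) (-x2)}" by auto
    then show "(x, f (- x)) \<in> {(x, y). (-x, y) \<in> H}" using f(4) by auto
  qed (use f c in auto)
qed

lemma left_piece:
  fixes h :: "real \<Rightarrow> real"
  assumes fc: "functionally_connected H" and ad: "a < d" and hc: "continuous_on {a..d} h"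
    and hH: "\<forall>x\<in>{a..d}. (x,h x) \<in> H" and uH: "(a,u) \<in> H" and oJ: "open J"
    and iJ: "is_interval J" and uJ: "u \<in> J" and hJ: "h ` {a..d} \<subseteq> J"
  shows "\<exists>c\<in>{a..d}. \<exists>L. continuous_on {a..c} L \<and> L ` {a..c} \<subseteq> J \<and>
           (\<forall>x\<in>{a..c}. (x, L x) \<in> H) \<and> L a = u \<and> L c = h c"
proof -
  consider "u = h a" | "h a < u" | "u < h a" by linarith
  then show ?thesis
  proof cases
    case 1
    show ?thesis
      by (rule bexI[of _ a], rule exI[of _ h]) (use 1 hH hJ ad in auto)
  next
    case 2
    show ?thesis by (rule core[OF assms 2])
  next
    case 3
    let ?H = "{(x,y). (x,-y) \<in> H}"
    have "\<exists>c\<in>{a..d}. \<exists>L. continuous_on {a..c} L \<and> L ` {a..c} \<subseteq> uminus ` J \<and>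
           (\<forall>x\<in>{a..c}. (x, L x) \<in> ?H) \<and> L a = -u \<and> L c = - h c"
    proof (rule core[where h="\<lambda>x. - h x"])
      show "functionally_connected ?H" by (rule fc_yflip[OF fc])
      show "continuous_on {a..d} (\<lambda>x. - h x)" using hc by (intro continuous_intros)
      show "open (uminus ` J)" using open_negations[OF oJ] by simp
      show "(\<lambda>x. - h x) ` {a..d} \<subseteq> uminus ` J" using hJ by auto
    qed (use ad hH uH iJ uJ 3 in auto)
    then obtain c L where cL: "c \<in> {a..d}" "continuous_on {a..c} L" "L ` {a..c} \<subseteq> uminus ` J"
      "\<forall>x\<in>{a..c}. (x, L x) \<in> ?H" "L a = -u" "L c = - h c" by blast
    show ?thesis
    proof (rule bexI[OF _ cL(1)], rule exI[of _ "\<lambda>x. - L x"], intro conjI)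
      show "continuous_on {a..c} (\<lambda>x. - L x)" using cL(2) by (intro continuous_intros)
      show "(\<lambda>x. - L x) ` {a..c} \<subseteq> J" using cL(3) by force
    qed (use cL in auto)
  qed
qed

theorem lemma4p3:
  fixes a b u v :: real and H :: "(real \<times> real) set" and h :: "real \<Rightarrow> real"
  assumes "a < b"
    and "functionally_connected H"
    and "{a..b} \<subseteq> fst ` H"
    and "continuous_on {a..b} h"
    and "\<forall>x\<in>{a..b}. (x, h x) \<in> H"
    and "(a, u) \<in> H" and "(b, v) \<in> H"
  shows "\<forall>J :: real set. open J \<and> is_interval J \<and> u \<in> J \<and> v \<in> J \<and> h ` {a..b} \<subseteq> J \<longrightarrow>
           (\<exists>g. continuous_on {a..b} g \<and> g ` {a..b} \<subseteq> J \<and>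
                (\<forall>x\<in>{a..b}. (x, g x) \<in> H) \<and> g a = u \<and> g b = v)"
proof (intro allI impI)
  fix J :: "real set"
  assume J: "open J \<and> is_interval J \<and> u \<in> J \<and> v \<in> J \<and> h ` {a..b} \<subseteq> J"
  define m where "m = (a + b) / 2"
  have am: "a < m" "m < b" using assms(1) by (auto simp: m_def)
  obtain c1 L where c1: "c1 \<in> {a..m}" and L: "continuous_on {a..c1} L" "L ` {a..c1} \<subseteq> J"
      "\<forall>x\<in>{a..c1}. (x, L x) \<in> H" "L a = u" "L c1 = h c1"
  proof -
    have "\<exists>c\<in>{a..m}. \<exists>L. continuous_on {a..c} L \<and> L ` {a..c} \<subseteq> J \<and>
           (\<forall>x\<in>{a..c}. (x, L x) \<in> H) \<and> L a = u \<and> L c = h c"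
    proof (rule left_piece[OF assms(2) am(1)])
      show "continuous_on {a..m} h" by (rule continuous_on_subset[OF assms(4)]) (use am in auto)
    qed (use assms J am in auto)
    then show ?thesis using that by blast
  qed
  let ?H = "{(x,y). (-x,y) \<in> H}"
  obtain c' R where c': "c' \<in> {-b..-m}" and R: "continuous_on {-b..c'} R" "R ` {-b..c'} \<subseteq> J"
      "\<forall>x\<in>{-b..c'}. (x, R x) \<in> ?H" "R (-b) = v" "R c' = h (- c')"
  proof -
    have "\<exists>c\<in>{-b..-m}. \<exists>L. continuous_on {-b..c} L \<and> L ` {-b..c} \<subseteq> J \<and>
           (\<forall>x\<in>{-b..c}. (x, L x) \<in> ?H) \<and> L (-b) = v \<and> L c = h (- c)"
    proof (rule left_piece[where h="\<lambda>x. h (- x)"])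
      show "functionally_connected ?H" by (rule fc_xflip[OF assms(2)])
      show "continuous_on {-b..-m} (\<lambda>x. h (- x))"
        by (rule continuous_on_compose2[OF assms(4) continuous_on_minus[OF continuous_on_id]]) (use am in auto)
      show "\<forall>x\<in>{- b..- m}. (x, h (- x)) \<in> ?H" using assms(5) am by auto
      show "(\<lambda>x. h (- x)) ` {- b..- m} \<subseteq> J" using J am by force
    qed (use assms J am in auto)
    then show ?thesis using that by blast
  qed
  define c2 where "c2 = - c'"
  have c2: "m \<le> c2" "c2 \<le> b" using c' by (auto simp: c2_def)
  define g where "g = (\<lambda>x. if x \<le> c1 then L x else if x \<le> c2 then h x else R (- x))"
  have Rc: "continuous_on {c2..b} (\<lambda>x. R (- x))"
    by (rule continuous_on_compose2[OF R(1) continuous_on_minus[OF continuous_on_id]]) (auto simp: c2_def)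
  show "\<exists>g. continuous_on {a..b} g \<and> g ` {a..b} \<subseteq> J \<and>
                (\<forall>x\<in>{a..b}. (x, g x) \<in> H) \<and> g a = u \<and> g b = v"
  proof (rule exI[of _ g], intro conjI)
    have inner: "continuous_on {c1..b} (\<lambda>x. if x \<le> c2 then h x else R (- x))"
    proof (rule glue)
      show "continuous_on {c1..c2} h" by (rule continuous_on_subset[OF assms(4)]) (use c1 c2 in auto)
    qed (use c1 c2 am Rc R(5) in \<open>auto simp: c2_def\<close>)
    show "continuous_on {a..b} g" unfolding g_def
      by (rule glue[OF _ _ L(1) inner]) (use c1 c2 am L(5) in auto)
    show "g ` {a..b} \<subseteq> J"
    proof
      fix y assume "y \<in> g ` {a..b}"
      then obtain x where x: "x \<in> {a..b}" "y = g x" by auto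
      show "y \<in> J"
        using x L(2) R(2) J c1 c2 by (auto simp: g_def c2_def split: if_splits)
    qed
    show "\<forall>x\<in>{a..b}. (x, g x) \<in> H"
    proof
      fix x assume x: "x \<in> {a..b}"
      show "(x, g x) \<in> H"
      proof (cases "x \<le> c1")
        case True then show ?thesis using x L(3) by (auto simp: g_def)
      next
        case False
        show ?thesis
        proof (cases "x \<le> c2")
          case True then show ?thesis using x False assms(5) by (auto simp: g_def)
        next
          case F2: False
          have "-x \<in> {-b..c'}" using x F2 by (auto simp: c2_def)
          then have "(- (-x), R (-x)) \<in> H" using R(3) by blast
          then show ?thesis using False F2 by (auto simp: g_def)
        qed
      qed
    qed
    show "g a = u" using L(4) c1 by (auto simp: g_def)
    show "g b = v" using R(4) R(5) c1 c2 am by (auto simp: g_def c2_def)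
  qed
qed

end
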